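(* Let $U$ and $V$ be finite-dimensional Euclidean vector spaces of the same dimension and let $\varphi$ be the endomorphism of $U\oplus V$ given in block form by $$\varphi=\begin{pmatrix}\mu\,\mathrm{Id}+A & M^*\\ M & \mu\,\mathrm{Id}+B\end{pmatrix},$$ where $\mu\in(-1,+\infty)$, $A$ and $B$ are symmetric and traceless endomorphisms of $U$ and $V$ respectively, $M:U\to V$ is linear with adjoint $M^*$ (with respect to the inner products), and $\|M(u)\|\geq\|u\|$ for every $u\in U$. Then $\varphi$ has at least one positive eigenvalue.
   Context: All norms and adjoints are taken with respect to the given Euclidean inner products; $\varphi$ is symmetric with respect to the orthogonal direct sum inner product on $U\oplus V$, so its eigenvalues are real. *)

theory Defs
  imports "HOL-Analysis.Analysis"
begin

text \<open>Trace of an endomorphism of a Euclidean space, computed in the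
  orthonormal basis Basis (independent of the orthonormal basis chosen).\<close>
definition lin_trace :: "('a::euclidean_space \<Rightarrow> 'a) \<Rightarrow> real" where
  "lin_trace f = (\<Sum>b\<in>Basis. f b \<bullet> b)"

definition is_eigenvalue :: "('a::real_vector \<Rightarrow> 'a) \<Rightarrow> real \<Rightarrow> bool" where
  "is_eigenvalue f c \<longleftrightarrow> (\<exists>x. x \<noteq> 0 \<and> f x = c *\<^sub>R x)"

end

theory Submission imports Defs begin

lemma sym_max_eig:
  fixes T :: "'a::euclidean_space \<Rightarrow> 'a"
  assumes lin: "linear T" and sym: "\<And>x y. T x \<bullet> y = x \<bullet> T y"
    and S: "subspace S" and inv: "\<And>x. x \<in> S \<Longrightarrow> T x \<in> S" and ne: "S \<noteq> {0}"
  shows "\<exists>x c. x \<in> S \<and> norm x = 1 \<and> T x = c *\<^sub>R x \<and> (\<forall>y\<in>S. T y \<bullet> y \<le> c * (y \<bullet> y))"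
proof -
  define K where "K = S \<inter> sphere 0 1"
  have cK: "compact K" unfolding K_def
    by (metis Int_commute closed_subspace[OF S] compact_Int_closed compact_sphere)
  obtain z where z: "z \<in> S" "z \<noteq> 0" using ne S subspace_0 by blast
  have "z /\<^sub>R norm z \<in> K" using z S unfolding K_def by (simp add: subspace_scale)
  hence neK: "K \<noteq> {}" by blast
  have cont: "continuous_on K (\<lambda>x. T x \<bullet> x)"
    by (intro continuous_intros linear_continuous_on lin continuous_on_id linear_conv_bounded_linear[THEN iffD1])
  obtain x0 where x0: "x0 \<in> K" and mx: "\<And>y. y \<in> K \<Longrightarrow> T y \<bullet> y \<le> T x0 \<bullet> x0"
    using continuous_attains_sup[OF cK neK cont] by blast
  define c where "c = T x0 \<bullet> x0"
  have x0S: "x0 \<in> S" and nx0: "norm x0 = 1" using x0 by (auto simp: K_def)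
  have x0x0: "x0 \<bullet> x0 = 1" using nx0 by (simp add: norm_eq_1)
  have bound: "T y \<bullet> y \<le> c * (y \<bullet> y)" if yS: "y \<in> S" for y
  proof (cases "y = 0")
    case True thus ?thesis using linear_0[OF lin] by simp
  next
    case False
    have "y /\<^sub>R norm y \<in> K" using yS False S unfolding K_def by (simp add: subspace_scale)
    hence "T (y /\<^sub>R norm y) \<bullet> (y /\<^sub>R norm y) \<le> c" using mx c_def by blast
    hence "(T y \<bullet> y) / (norm y)^2 \<le> c"
      by (simp add: linear_scale[OF lin] power2_eq_square divide_inverse mult_ac)
    moreover have "y \<bullet> y = (norm y)^2" by (simp add: power2_norm_eq_inner)
    moreover have "(norm y)^2 > 0" using False by simp
    ultimately show ?thesis by (simp add: divide_le_eq mult.commute)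
  qed
  define w where "w = c *\<^sub>R x0 - T x0"
  have wS: "w \<in> S" unfolding w_def using S x0S inv by (simp add: subspace_diff subspace_scale)
  have w0: "w = 0"
  proof (rule ccontr)
    assume "w \<noteq> 0"
    define a where "a = w \<bullet> w"
    define b where "b = c * (w \<bullet> w) - T w \<bullet> w"
    have apos: "a > 0" using \<open>w \<noteq> 0\<close> a_def by simp
    have key: "0 \<le> 2 * t * a + t^2 * b" for t
    proof -
      have "x0 + t *\<^sub>R w \<in> S" using S x0S wS by (simp add: subspace_add subspace_scale)
      from bound[OF this] have "0 \<le> c * ((x0 + t *\<^sub>R w) \<bullet> (x0 + t *\<^sub>R w)) - T (x0 + t *\<^sub>R w) \<bullet> (x0 + t *\<^sub>R w)"
        by simp
      also have "\<dots> = (c * (x0 \<bullet> x0) - T x0 \<bullet> x0) + 2 * t * ((c *\<^sub>R x0 - T x0) \<bullet> w) + t^2 * b"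
        unfolding b_def
        by (simp add: linear_add[OF lin] linear_scale[OF lin] inner_add_left inner_add_right
            inner_diff_left sym[of w x0] inner_commute[of w x0] inner_commute[of "T x0" w] algebra_simps power2_eq_square)
      also have "\<dots> = 2 * t * a + t^2 * b" using x0x0 c_def a_def w_def by simp
      finally show ?thesis .
    qed
    define s where "s = \<bar>b\<bar> + 1"
    have spos: "s > 0" by (simp add: s_def)
    have "0 \<le> 2 * (-a/s) * a + (-a/s)^2 * b" by (rule key)
    also have "\<dots> = (a^2 * (b - 2 * s)) / (s^2)" using spos by (simp add: field_simps power2_eq_square)
    also have "\<dots> < 0" using apos spos by (intro divide_neg_pos mult_pos_neg) (auto simp: s_def)
    finally show False by simp
  qed
  have "T x0 = c *\<^sub>R x0" using w0 w_def by simp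
  thus ?thesis using x0S nx0 bound by blast
qed


lemma sym_eigbasis:
  fixes T :: "'a::euclidean_space \<Rightarrow> 'a"
  assumes lin: "linear T" and sym: "\<And>x y. T x \<bullet> y = x \<bullet> T y"
  shows "subspace S \<Longrightarrow> (\<And>x. x \<in> S \<Longrightarrow> T x \<in> S) \<Longrightarrow>
    \<exists>B. B \<subseteq> S \<and> finite B \<and> span B = S \<and> (\<forall>x\<in>B. norm x = 1 \<and> (\<exists>c. T x = c *\<^sub>R x))
      \<and> pairwise orthogonal B"
proof (induction "dim S" arbitrary: S rule: less_induct)
  case less
  show ?case
  proof (cases "S = {0}")
    case True
    then show ?thesis by (intro exI[of _ "{}"]) auto
  next
    case False
    obtain x c where x: "x \<in> S" "norm x = 1" "T x = c *\<^sub>R x"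
      using sym_max_eig[OF lin sym less.prems False] by blast
    define S' where "S' = S \<inter> {y. orthogonal x y}"
    have sub': "subspace S'" unfolding S'_def
      by (intro subspace_inter less.prems(1) subspace_orthogonal_to_vector)
    have inv': "T y \<in> S'" if "y \<in> S'" for y
    proof -
      have "x \<bullet> T y = T x \<bullet> y" using sym by simp
      also have "\<dots> = 0" using that x by (simp add: S'_def orthogonal_def)
      finally show ?thesis using that less.prems by (simp add: S'_def orthogonal_def)
    qed
    have "x \<notin> S'" using x by (auto simp: S'_def orthogonal_def)
    hence "S' \<subset> S" using x S'_def by blast
    hence "dim S' < dim S"
      using dim_psubset sub' less.prems(1) by (metis span_eq_iff)
    from less.hyps[OF this sub' inv'] obtain B where
      B: "B \<subseteq> S'" "finite B" "span B = S'" "\<forall>x\<in>B. norm x = 1 \<and> (\<exists>c. T x = c *\<^sub>R x)"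
         "pairwise orthogonal B" by blast
    have "span (insert x B) = S"
    proof
      show "span (insert x B) \<subseteq> S"
        using B(1) x(1) less.prems(1) S'_def by (intro span_minimal) auto
    next
      show "S \<subseteq> span (insert x B)"
      proof
        fix y assume y: "y \<in> S"
        have "y - (x \<bullet> y) *\<^sub>R x \<in> S'"
          using y x less.prems(1) by (simp add: S'_def orthogonal_def subspace_diff subspace_scale
              inner_diff_right dot_square_norm)
        hence "y - (x \<bullet> y) *\<^sub>R x \<in> span (insert x B)"
          using B(3) span_mono[of B "insert x B"] by blast
        moreover have "(x \<bullet> y) *\<^sub>R x \<in> span (insert x B)"
          by (simp add: span_base span_mul)
        ultimately have "y - (x \<bullet> y) *\<^sub>R x + (x \<bullet> y) *\<^sub>R x \<in> span (insert x B)"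
          by (rule span_add)
        thus "y \<in> span (insert x B)" by simp
      qed
    qed
    moreover have "pairwise orthogonal (insert x B)"
      using B(5) B(1) unfolding pairwise_insert S'_def by (auto simp: orthogonal_commute)
    moreover have "insert x B \<subseteq> S" using B(1) x(1) S'_def by auto
    ultimately show ?thesis using B(2,4) x
      by (intro exI[of _ "insert x B"]) auto
  qed
qed

lemma onb_expand:
  fixes E :: "'a::euclidean_space set"
  assumes fin: "finite E" and sp: "span E = UNIV" and orth: "pairwise orthogonal E"
    and un: "\<forall>e\<in>E. norm e = 1"
  shows "x = (\<Sum>e\<in>E. (x \<bullet> e) *\<^sub>R e)"
proof -
  define r where "r = x - (\<Sum>e\<in>E. (x \<bullet> e) *\<^sub>R e)"
  have "orthogonal r e'" if "e' \<in> E" for e'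
  proof -
    have "(\<Sum>e\<in>E. (x \<bullet> e) * (e \<bullet> e')) = (\<Sum>e\<in>E. if e = e' then x \<bullet> e' else 0)"
    proof (rule sum.cong)
      fix e assume "e \<in> E"
      then show "(x \<bullet> e) * (e \<bullet> e') = (if e = e' then x \<bullet> e' else 0)"
        using orth that un by (auto simp: pairwise_def orthogonal_def dot_square_norm)
    qed simp
    also have "\<dots> = x \<bullet> e'" using fin that by simp
    finally have "(\<Sum>e\<in>E. (x \<bullet> e) * (e \<bullet> e')) = x \<bullet> e'" .
    hence "r \<bullet> e' = 0" unfolding r_def
      by (simp add: inner_diff_left inner_sum_left)
    thus ?thesis by (simp add: orthogonal_def)
  qed
  hence "orthogonal r r"
    using orthogonal_to_span[of r E r] sp by (simp add: orthogonal_commute)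
  thus ?thesis unfolding r_def orthogonal_def by simp
qed

lemma trace_onb:
  fixes f :: "'a::euclidean_space \<Rightarrow> 'a"
  assumes sym: "\<And>x y. f x \<bullet> y = x \<bullet> f y"
    and fin: "finite E" and sp: "span E = UNIV" and orth: "pairwise orthogonal E"
    and un: "\<forall>e\<in>E. norm e = 1"
  shows "(\<Sum>b\<in>Basis. f b \<bullet> b) = (\<Sum>e\<in>E. f e \<bullet> e)"
proof -
  have "(\<Sum>b\<in>Basis. f b \<bullet> b) = (\<Sum>b\<in>Basis. \<Sum>e\<in>E. (f b \<bullet> e) * (e \<bullet> b))"
  proof (rule sum.cong)
    fix b :: 'a
    have "f b \<bullet> b = (\<Sum>e\<in>E. (f b \<bullet> e) *\<^sub>R e) \<bullet> b"
      using onb_expand[OF fin sp orth un, of "f b"] by simp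
    then show "f b \<bullet> b = (\<Sum>e\<in>E. (f b \<bullet> e) * (e \<bullet> b))"
      by (simp add: inner_sum_left)
  qed simp
  also have "\<dots> = (\<Sum>e\<in>E. \<Sum>b\<in>Basis. (f e \<bullet> b) * (e \<bullet> b))"
  proof (subst sum.swap, intro sum.cong refl)
    fix e b
    have "f b \<bullet> e = f e \<bullet> b" using sym[of b e] by (simp add: inner_commute)
    then show "(f b \<bullet> e) * (e \<bullet> b) = (f e \<bullet> b) * (e \<bullet> b)" by simp
  qed
  also have "\<dots> = (\<Sum>e\<in>E. f e \<bullet> e)"
    by (simp add: euclidean_inner[symmetric])
  finally show ?thesis .
qed


theorem mainTheorem15:
  fixes A :: "'u::euclidean_space \<Rightarrow> 'u"
    and B :: "'v::euclidean_space \<Rightarrow> 'v"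
    and M :: "'u \<Rightarrow> 'v"
    and \<mu> :: real
  assumes dim: "DIM('u) = DIM('v)"
    and mu: "\<mu> > -1"
    and A_lin: "linear A" and A_sym: "\<And>x y. A x \<bullet> y = x \<bullet> A y" and A_tr: "lin_trace A = 0"
    and B_lin: "linear B" and B_sym: "\<And>x y. B x \<bullet> y = x \<bullet> B y" and B_tr: "lin_trace B = 0"
    and M_lin: "linear M"
    and M_ge: "\<And>u. norm (M u) \<ge> norm u"
  shows "\<exists>c>0. is_eigenvalue
           (\<lambda>(u, v). (\<mu> *\<^sub>R u + A u + adjoint M v, M u + \<mu> *\<^sub>R v + B v)) c"
proof -
  define phi :: "'u \<times> 'v \<Rightarrow> 'u \<times> 'v" where
    "phi = (\<lambda>(u, v). (\<mu> *\<^sub>R u + A u + adjoint M v, M u + \<mu> *\<^sub>R v + B v))"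
  define T where "T = adjoint M \<circ> M"
  have Mad: "linear (adjoint M)" by (rule adjoint_linear[OF M_lin])
  have linT: "linear T" unfolding T_def by (rule linear_compose[OF M_lin Mad])
  have symT: "T x \<bullet> y = x \<bullet> T y" for x y
  proof -
    have "T x \<bullet> y = y \<bullet> adjoint M (M x)" unfolding T_def o_def by (rule inner_commute)
    also have "\<dots> = M y \<bullet> M x" by (rule adjoint_works[OF M_lin])
    also have "\<dots> = M x \<bullet> M y" by (rule inner_commute)
    also have "\<dots> = x \<bullet> T y" unfolding T_def o_def by (rule adjoint_works[OF M_lin, symmetric])
    finally show ?thesis .
  qed
  obtain E where E: "finite E" "span E = UNIV" "\<forall>x\<in>E. norm x = 1 \<and> (\<exists>c. T x = c *\<^sub>R x)"
      "pairwise orthogonal E"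
    using sym_eigbasis[OF linT symT, of UNIV] subspace_UNIV by auto
  have E1: "\<forall>e\<in>E. norm e = 1" using E(3) by blast
  have Morth: "M e \<bullet> M e' = 0" if "e \<in> E" "e' \<in> E" "e \<noteq> e'" for e e'
  proof -
    have "\<exists>c. T e' = c *\<^sub>R e'" using bspec[OF E(3) that(2)] by (rule conjunct2)
    then obtain c where c: "T e' = c *\<^sub>R e'" ..
    have "M e \<bullet> M e' = e \<bullet> T e'" unfolding T_def o_def by (rule adjoint_works[OF M_lin, symmetric])
    also have "\<dots> = c * (e \<bullet> e')" using c by simp
    also have "\<dots> = 0"
    proof -
      have "orthogonal e e'" using E(4) that unfolding pairwise_def by blast
      thus ?thesis by (simp add: orthogonal_def)
    qed
    finally show ?thesis .
  qed
  have indE: "independent E"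
    using E(4) E1 by (intro pairwise_orthogonal_independent) auto
  have cardE: "card E = DIM('u)"
    using dim_span_eq_card_independent[OF indE] E(2) by simp
  define g where "g e = M e /\<^sub>R norm (M e)" for e
  have nMe: "norm (M e) \<ge> 1" if "e \<in> E" for e using M_ge[of e] E1 that by simp
  have gnorm: "norm (g e) = 1" if "e \<in> E" for e
  proof -
    have "norm (M e) \<noteq> 0" using nMe[OF that] by linarith
    thus ?thesis by (simp add: g_def)
  qed
  have gorth: "g e \<bullet> g e' = 0" if "e \<in> E" "e' \<in> E" "e \<noteq> e'" for e e'
    using Morth[OF that] by (simp add: g_def)
  have ginj: "inj_on g E"
  proof (rule inj_onI)
    fix e e' assume h: "e \<in> E" "e' \<in> E" "g e = g e'"
    show "e = e'"
    proof (rule ccontr)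
      assume "e \<noteq> e'"
      hence "g e \<bullet> g e' = 0" using gorth h by blast
      moreover have "g e \<bullet> g e = 1" using gnorm[OF h(1)] by (simp add: dot_square_norm)
      ultimately show False using h(3) by simp
    qed
  qed
  define F where "F = g ` E"
  have finF: "finite F" using E(1) F_def by simp
  have F1: "\<forall>f\<in>F. norm f = 1" using gnorm F_def by auto
  have orthF: "pairwise orthogonal F"
    unfolding F_def pairwise_def orthogonal_def using gorth by auto
  have indF: "independent F"
    using orthF F1 by (intro pairwise_orthogonal_independent) auto
  have cardF: "card F = DIM('v)" using card_image[OF ginj] cardE dim F_def by simp
  have spF: "span F = UNIV"
    using card_ge_dim_independent[of F UNIV] indF cardF by auto
  have trA: "(\<Sum>e\<in>E. A e \<bullet> e) = 0"
    using trace_onb[OF A_sym E(1) E(2) E(4) E1] A_tr by (simp add: lin_trace_def)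
  have trB: "(\<Sum>e\<in>E. B (g e) \<bullet> g e) = 0"
  proof -
    have "(\<Sum>e\<in>E. B (g e) \<bullet> g e) = (\<Sum>f\<in>F. B f \<bullet> f)"
      unfolding F_def by (simp add: sum.reindex[OF ginj])
    also have "\<dots> = 0"
      using trace_onb[OF B_sym finF spF orthF F1] B_tr by (simp add: lin_trace_def)
    finally show ?thesis .
  qed
  have Qe: "phi (e, g e) \<bullet> (e, g e) = 2 * \<mu> + A e \<bullet> e + B (g e) \<bullet> g e + 2 * norm (M e)"
    if "e \<in> E" for e
  proof -
    have ee: "e \<bullet> e = 1" using E1 that by (simp add: dot_square_norm)
    have gg: "g e \<bullet> g e = 1" using gnorm[OF that] by (simp add: dot_square_norm)
    have Mg: "M e \<bullet> g e = norm (M e)"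
    proof -
      have "norm (M e) \<noteq> 0" using nMe[OF that] by linarith
      thus ?thesis by (simp add: g_def dot_square_norm power2_eq_square)
    qed
    have adj: "adjoint M (g e) \<bullet> e = M e \<bullet> g e"
      using adjoint_works[OF M_lin, of e "g e"] by (simp add: inner_commute)
    show ?thesis unfolding phi_def
      by (simp add: inner_add_left ee gg Mg adj)
  qed
  have "(\<Sum>e\<in>E. phi (e, g e) \<bullet> (e, g e)) \<ge> (\<Sum>e\<in>E. 2 * \<mu> + 2)"
  proof -
    have "(\<Sum>e\<in>E. phi (e, g e) \<bullet> (e, g e)) =
        (\<Sum>e\<in>E. (2 * \<mu> + 2 * norm (M e)) + A e \<bullet> e + B (g e) \<bullet> g e)"
      by (rule sum.cong) (simp_all add: Qe)
    also have "\<dots> =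
        (\<Sum>e\<in>E. 2 * \<mu> + 2 * norm (M e)) + (\<Sum>e\<in>E. A e \<bullet> e) + (\<Sum>e\<in>E. B (g e) \<bullet> g e)"
      by (simp only: sum.distrib)
    also have "\<dots> = (\<Sum>e\<in>E. 2 * \<mu> + 2 * norm (M e))" using trA trB by simp
    also have "\<dots> \<ge> (\<Sum>e\<in>E. 2 * \<mu> + 2)"
      by (intro sum_mono) (use nMe in auto)
    finally show ?thesis .
  qed
  moreover have "(\<Sum>e\<in>E. 2 * \<mu> + 2) > 0"
    using cardE mu by simp
  ultimately have "(\<Sum>e\<in>E. phi (e, g e) \<bullet> (e, g e)) > 0" by linarith
  hence "\<exists>e\<in>E. phi (e, g e) \<bullet> (e, g e) > 0"
  proof (rule contrapos_pp)
    assume "\<not> (\<exists>e\<in>E. phi (e, g e) \<bullet> (e, g e) > 0)"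
    hence h: "\<forall>e\<in>E. phi (e, g e) \<bullet> (e, g e) \<le> 0" by (simp add: not_less)
    have "(\<Sum>e\<in>E. phi (e, g e) \<bullet> (e, g e)) \<le> 0" by (rule sum_nonpos) (use h in blast)
    thus "\<not> (\<Sum>e\<in>E. phi (e, g e) \<bullet> (e, g e)) > 0" by simp
  qed
  then obtain e where eE: "e \<in> E" and Qpos: "phi (e, g e) \<bullet> (e, g e) > 0" ..
  have linphi: "linear phi"
  proof (rule linearI)
    fix x y :: "'u \<times> 'v"
    show "phi (x + y) = phi x + phi y"
      by (cases x, cases y) (simp add: phi_def linear_add[OF A_lin] linear_add[OF B_lin]
          linear_add[OF M_lin] linear_add[OF Mad] scaleR_add_right)
  next
    fix c :: real and x :: "'u \<times> 'v"
    show "phi (c *\<^sub>R x) = c *\<^sub>R phi x"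
      by (cases x) (simp add: phi_def linear_scale[OF A_lin] linear_scale[OF B_lin]
          linear_scale[OF M_lin] linear_scale[OF Mad] scaleR_add_right)
  qed
  have symphi: "phi x \<bullet> y = x \<bullet> phi y" for x y
  proof (cases x, cases y)
    fix a b c d assume xy: "x = (a, b)" "y = (c, d)"
    have 1: "adjoint M b \<bullet> c = M c \<bullet> b"
      using adjoint_works[OF M_lin, of c b] by (simp add: inner_commute)
    have 2: "a \<bullet> adjoint M d = M a \<bullet> d" by (simp add: adjoint_works[OF M_lin])
    show ?thesis unfolding xy phi_def
      by (simp add: inner_add_left inner_add_right A_sym B_sym 1 2 inner_commute[of b "M c"])
  qed
  have ne: "(UNIV :: ('u \<times> 'v) set) \<noteq> {0}"
  proof -
    have "e \<noteq> 0" using E1 eE by auto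
    hence "(e, g e) \<noteq> 0" by (simp add: zero_prod_def)
    thus ?thesis by blast
  qed
  obtain x c where xc: "norm x = 1" "phi x = c *\<^sub>R x" "\<forall>y. phi y \<bullet> y \<le> c * (y \<bullet> y)"
    using sym_max_eig[OF linphi symphi subspace_UNIV _ ne] by auto
  have "c > 0"
  proof (rule ccontr)
    assume "\<not> c > 0"
    hence "c * ((e, g e) \<bullet> (e, g e)) \<le> 0" by (simp add: mult_nonpos_nonneg)
    moreover have "phi (e, g e) \<bullet> (e, g e) \<le> c * ((e, g e) \<bullet> (e, g e))" using xc(3) by blast
    ultimately show False using Qpos by linarith
  qed
  moreover have "is_eigenvalue phi c"
    unfolding is_eigenvalue_def using xc by (intro exI[of _ x]) auto
  ultimately show ?thesis unfolding phi_def by blast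
qed

end
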